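(* Let $n\ge 1$ and let $\mathbb{P}$ be a set of distinct unique configurations of length $n$. Then $K(n)=\Omega(\log|\mathbb{P}|)$; more precisely $K(n)\ge\lceil\log_3|\mathbb{P}|\rceil$.
   Context: For a real sequence $A=(a_1,\dots,a_n)$, a configuration is a sequence $P=(p_1,\dots,p_n)$ with $p_\ell\in\{1,\dots,n-\ell+1\}$ for each $\ell$; $P$ is an output configuration for $A$ if for every $\ell=1,\dots,n$ the sum $a_{p_\ell}+\dots+a_{p_\ell+\ell-1}$ is maximum among all sums of $\ell$ consecutive entries of $A$. Let $\mathcal{P}(A)$ be the set of output configurations of $A$. A configuration $P$ is unique if there exists $A\in\mathbb{R}^n$ with $\mathcal{P}(A)=\{P\}$. The MCSP (in this form) asks, given $A$, to output some output configuration for $A$. A decision tree algorithm for inputs of length $n$ is a ternary tree: each internal node holds a test "$f(A)<0$, $=0$, or $>0$?" for some rational function $f$ of the $n$ inputs, with one branch per outcome; each leaf holds functions $g_1,\dots,g_n$ and outputs $P=(g_1(A),\dots,g_n(A))$. The tree solves MCSP if for every input $A$ the output at the reached leaf is an output configuration for $A$. Its cost is its height, and $K(n)$ is the minimum cost of a decision tree solving MCSP for inputs of length $n$. *)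

theory Defs
  imports Complex_Main
begin

text \<open>Inputs of length n are real lists A of length n; a_i = A ! (i-1).
  Configurations are nat lists P of length n; p_l = P ! (l-1).\<close>

definition window_sum :: "real list \<Rightarrow> nat \<Rightarrow> nat \<Rightarrow> real" where
  "window_sum A l p = (\<Sum>i = p..p + l - 1. A ! (i - 1))"

definition is_config :: "nat \<Rightarrow> nat list \<Rightarrow> bool" where
  "is_config n P \<longleftrightarrow> length P = n \<and>
     (\<forall>l \<in> {1..n}. P ! (l - 1) \<in> {1..n - l + 1})"

definition is_output_config :: "real list \<Rightarrow> nat list \<Rightarrow> bool" where
  "is_output_config A P \<longleftrightarrow> is_config (length A) P \<and>
     (\<forall>l \<in> {1..length A}. \<forall>q \<in> {1..length A - l + 1}.
        window_sum A l q \<le> window_sum A l (P ! (l - 1)))"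

definition output_configs :: "real list \<Rightarrow> nat list set" where
  "output_configs A = {P. is_output_config A P}"

definition unique_config :: "nat \<Rightarrow> nat list \<Rightarrow> bool" where
  "unique_config n P \<longleftrightarrow> is_config n P \<and>
     (\<exists>A. length A = n \<and> output_configs A = {P})"

datatype pexp = PVar nat | PConst real | PAdd pexp pexp | PMul pexp pexp | PNeg pexp

primrec peval :: "real list \<Rightarrow> pexp \<Rightarrow> real" where
  "peval A (PVar i) = A ! (i - 1)"
| "peval A (PConst c) = c"
| "peval A (PAdd p q) = peval A p + peval A q"
| "peval A (PMul p q) = peval A p * peval A q"
| "peval A (PNeg p) = - peval A p"

primrec pvars :: "pexp \<Rightarrow> nat set" where
  "pvars (PVar i) = {i}"
| "pvars (PConst c) = {}"
| "pvars (PAdd p q) = pvars p \<union> pvars q"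
| "pvars (PMul p q) = pvars p \<union> pvars q"
| "pvars (PNeg p) = pvars p"

text \<open>A rational function of n variables: a pair (numerator, denominator) of polynomials
  in x_1..x_n whose denominator is not the zero polynomial.\<close>

type_synonym rfun = "pexp \<times> pexp"

definition is_rfun :: "nat \<Rightarrow> rfun \<Rightarrow> bool" where
  "is_rfun n f \<longleftrightarrow> pvars (fst f) \<subseteq> {1..n} \<and> pvars (snd f) \<subseteq> {1..n} \<and>
     (\<exists>A. length A = n \<and> peval A (snd f) \<noteq> 0)"

definition rfeval :: "real list \<Rightarrow> rfun \<Rightarrow> real" where
  "rfeval A f = peval A (fst f) / peval A (snd f)"

datatype dtree = Leaf "rfun list" | Node rfun dtree dtree dtree

primrec height :: "dtree \<Rightarrow> nat" where
  "height (Leaf gs) = 0"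
| "height (Node f lt eq gt) = 1 + max (height lt) (max (height eq) (height gt))"

primrec wf_dtree :: "nat \<Rightarrow> dtree \<Rightarrow> bool" where
  "wf_dtree n (Leaf gs) \<longleftrightarrow> length gs = n \<and> (\<forall>g \<in> set gs. is_rfun n g)"
| "wf_dtree n (Node f lt eq gt) \<longleftrightarrow> is_rfun n f \<and> wf_dtree n lt \<and> wf_dtree n eq \<and> wf_dtree n gt"

primrec run :: "real list \<Rightarrow> dtree \<Rightarrow> real list" where
  "run A (Leaf gs) = map (rfeval A) gs"
| "run A (Node f lt eq gt) =
     (if rfeval A f < 0 then run A lt else if rfeval A f = 0 then run A eq else run A gt)"

definition solves_MCSP :: "nat \<Rightarrow> dtree \<Rightarrow> bool" where
  "solves_MCSP n T \<longleftrightarrow> wf_dtree n T \<and>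
     (\<forall>A. length A = n \<longrightarrow> (\<exists>P. is_output_config A P \<and> run A T = map real P))"

definition K :: "nat \<Rightarrow> nat" where
  "K n = (LEAST h. \<exists>T. solves_MCSP n T \<and> height T = h)"

end

theory Submission
  imports Defs "HOL-Computational_Algebra.Polynomial"
begin


definition box :: "real list \<Rightarrow> real \<Rightarrow> real list set" where
  "box A0 r = {A. length A = length A0 \<and> (\<forall>i<length A0. \<bar>A!i - A0!i\<bar> < r)}"

definition nb :: "real list \<Rightarrow> real list filter" where
  "nb A0 = (INF r\<in>{0<..}. principal (box A0 r))"

lemma eventually_nb:
  "eventually P (nb A0) \<longleftrightarrow> (\<exists>r>0. \<forall>A\<in>box A0 r. P A)"
proof -
  have "eventually P (nb A0) \<longleftrightarrow> (\<exists>r\<in>{0<..}. eventually P (principal (box A0 r)))"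
    unfolding nb_def
  proof (rule eventually_INF_base)
    show "{0<..} \<noteq> ({}::real set)" by auto
    fix a b :: real assume "a \<in> {0<..}" "b \<in> {0<..}"
    then show "\<exists>x\<in>{0<..}. principal (box A0 x) \<le> inf (principal (box A0 a)) (principal (box A0 b))"
      by (intro bexI[of _ "min a b"]) (auto simp: box_def)
  qed
  then show ?thesis by (auto simp: eventually_principal)
qed

lemma box_center: "r > 0 \<Longrightarrow> A0 \<in> box A0 r"
  by (auto simp: box_def)

lemma eventually_nb_self: "eventually P (nb A0) \<Longrightarrow> P A0"
  by (auto simp: eventually_nb box_center)

lemma eventually_nb_length: "eventually (\<lambda>A. length A = length A0) (nb A0)"
  by (auto simp: eventually_nb box_def intro: exI[of _ 1])

lemma eventually_nb_open:
  assumes "eventually P (nb A0)"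
  shows "eventually (\<lambda>A. eventually P (nb A)) (nb A0)"
proof -
  obtain r where r: "r > 0" "\<forall>A\<in>box A0 r. P A" using assms by (auto simp: eventually_nb)
  have "eventually P (nb A)" if A: "A \<in> box A0 (r/2)" for A
  proof -
    have "A' \<in> box A0 r" if A': "A' \<in> box A (r/2)" for A'
    proof -
      have "\<bar>A'!i - A0!i\<bar> < r" if i: "i < length A0" for i
      proof -
        have "\<bar>A'!i - A!i\<bar> < r/2" "\<bar>A!i - A0!i\<bar> < r/2" using A A' i by (auto simp: box_def)
        then show ?thesis by linarith
      qed
      then show ?thesis using A A' by (auto simp: box_def)
    qed
    then show ?thesis unfolding eventually_nb using r by (intro exI[of _ "r/2"]) auto
  qed
  then show ?thesis unfolding eventually_nb using r by (intro exI[of _ "r/2"]) auto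
qed

lemma peval_cont:
  assumes "pvars e \<subseteq> {1..length A0}"
  shows "((\<lambda>A. peval A e) \<longlongrightarrow> peval A0 e) (nb A0)"
  using assms
proof (induction e)
  case (PVar i)
  then have i: "i - 1 < length A0" by auto
  show ?case unfolding tendsto_iff
  proof (intro allI impI)
    fix e :: real assume "e > 0"
    then show "eventually (\<lambda>x. dist (peval x (PVar i)) (peval A0 (PVar i)) < e) (nb A0)"
      using i by (auto simp: eventually_nb box_def dist_real_def intro!: exI[of _ e])
  qed
next
  case (PConst c) then show ?case by simp
next
  case (PAdd p q) then show ?case by (auto intro: tendsto_add)
next
  case (PMul p q) then show ?case by (auto intro: tendsto_mult)
next
  case (PNeg p) then show ?case by (auto intro: tendsto_minus)
qed

definition line :: "real list \<Rightarrow> real list \<Rightarrow> real \<Rightarrow> real list" where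
  "line A0 B t = map2 (\<lambda>a b. a + t * (b - a)) A0 B"

lemma line_poly:
  assumes "pvars e \<subseteq> {1..length A0}" "length B = length A0"
  shows "\<exists>p. \<forall>t. peval (line A0 B t) e = poly p t"
  using assms(1)
proof (induction e)
  case (PVar i)
  then have i: "i - 1 < length A0" by auto
  show ?case
    by (rule exI[of _ "[:A0!(i-1), B!(i-1) - A0!(i-1):]"]) (use i assms(2) in \<open>auto simp: line_def\<close>)
next
  case (PConst c) then show ?case by (intro exI[of _ "[:c:]"]) simp
next
  case (PAdd p q)
  then obtain a b where "\<forall>t. peval (line A0 B t) p = poly a t" "\<forall>t. peval (line A0 B t) q = poly b t" by auto
  then show ?case by (intro exI[of _ "a + b"]) simp
next
  case (PMul p q)
  then obtain a b where "\<forall>t. peval (line A0 B t) p = poly a t" "\<forall>t. peval (line A0 B t) q = poly b t" by auto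
  then show ?case by (intro exI[of _ "a * b"]) simp
next
  case (PNeg p)
  then obtain a where "\<forall>t. peval (line A0 B t) p = poly a t" by auto
  then show ?case by (intro exI[of _ "- a"]) simp
qed

lemma identity_thm:
  assumes vars: "pvars e \<subseteq> {1..length A0}"
    and ev: "eventually (\<lambda>A. peval A e = 0) (nb A0)"
    and B: "length B = length A0"
  shows "peval B e = 0"
proof -
  obtain p where p: "\<And>t. peval (line A0 B t) e = poly p t" using line_poly[OF vars B] by blast
  obtain r where r: "r > 0" "\<forall>A\<in>box A0 r. peval A e = 0" using ev by (auto simp: eventually_nb)
  define M where "M = (\<Sum>i<length A0. \<bar>B!i - A0!i\<bar>)"
  have M0: "M \<ge> 0" unfolding M_def by (auto intro: sum_nonneg)
  have Mi: "\<bar>B!i - A0!i\<bar> \<le> M" if "i < length A0" for i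
    unfolding M_def using that by (intro member_le_sum) auto
  define d where "d = r / (M + 1)"
  have d: "d > 0" using r M0 by (auto simp: d_def)
  have "poly p t = 0" if t: "t \<in> {0<..<d}" for t
  proof -
    have "line A0 B t \<in> box A0 r"
      unfolding box_def
    proof (intro CollectI conjI allI impI)
      show "length (line A0 B t) = length A0" using B by (simp add: line_def)
      fix i assume i: "i < length A0"
      have "\<bar>line A0 B t ! i - A0 ! i\<bar> = t * \<bar>B!i - A0!i\<bar>"
        using i B t by (simp add: line_def abs_mult)
      also have "\<dots> \<le> t * M" using Mi[OF i] t by (intro mult_left_mono) auto
      also have "\<dots> < d * (M + 1)" using t M0
        by (smt (verit, best) greaterThanLessThan_iff mult_strict_mono mult_left_mono)
      also have "\<dots> = r" using M0 by (simp add: d_def)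
      finally show "\<bar>line A0 B t ! i - A0 ! i\<bar> < r" .
    qed
    then show ?thesis using r p[of t] by auto
  qed
  then have "{0<..<d} \<subseteq> {t. poly p t = 0}" by auto
  moreover have "infinite {0<..<d}" using d by simp
  ultimately have "infinite {t. poly p t = 0}" using finite_subset by blast
  then have "p = 0" using poly_roots_finite by blast
  moreover have "line A0 B 1 = B" using B
    by (intro nth_equalityI) (auto simp: line_def)
  ultimately show ?thesis using p[of 1] by simp
qed




primrec leaves :: "dtree \<Rightarrow> rfun list set" where
  "leaves (Leaf gs) = {gs}"
| "leaves (Node f a b c) = leaves a \<union> leaves b \<union> leaves c"

lemma leaves_card: "finite (leaves T) \<and> card (leaves T) \<le> 3 ^ height T"
proof (induction T)
  case (Leaf gs) then show ?case by simp
next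
  case (Node f a b c)
  let ?h = "max (height a) (max (height b) (height c))"
  have "card (leaves a \<union> leaves b \<union> leaves c) \<le> card (leaves a) + card (leaves b) + card (leaves c)"
    by (meson add_le_mono card_Un_le le_trans order_refl)
  also have "\<dots> \<le> 3^?h + 3^?h + 3^?h" using Node
    by (intro add_mono) (meson le_trans max.cobounded1 max.cobounded2 one_le_numeral power_increasing)+
  finally show ?case using Node by simp
qed

lemma rfeval_cont:
  assumes "pvars (fst f) \<subseteq> {1..length A0}" "pvars (snd f) \<subseteq> {1..length A0}" "peval A0 (snd f) \<noteq> 0"
  shows "((\<lambda>A. rfeval A f) \<longlongrightarrow> rfeval A0 f) (nb A0)"
  unfolding rfeval_def using assms by (intro tendsto_divide peval_cont)

lemma ev_exists:
  assumes "\<not> eventually R F" "eventually S F"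
  shows "\<exists>x. S x \<and> \<not> R x"
proof (rule ccontr)
  assume "\<not> ?thesis"
  then have "eventually R F" using assms(2) by (auto elim: eventually_mono)
  with assms(1) show False by simp
qed

lemma descend:
  assumes "wf_dtree n T" "length A0 = n" "eventually Q (nb A0)"
  shows "\<exists>A1 gs. length A1 = n \<and> gs \<in> leaves T \<and>
           eventually (\<lambda>A. Q A \<and> run A T = map (rfeval A) gs) (nb A1)"
  using assms
proof (induction T arbitrary: A0 Q)
  case (Leaf gs)
  then show ?case by (intro exI[of _ A0] exI[of _ gs]) auto
next
  case (Node f lt eq gt)
  obtain p q where f: "f = (p, q)" by fastforce
  from Node.prems have rf: "is_rfun n f" and wl: "wf_dtree n lt" and we: "wf_dtree n eq"
    and wg: "wf_dtree n gt" by auto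
  from rf f have vp: "pvars p \<subseteq> {1..n}" and vq: "pvars q \<subseteq> {1..n}"
    and qex: "\<exists>A. length A = n \<and> peval A q \<noteq> 0" by (auto simp: is_rfun_def)
  have qnz: "\<not> eventually (\<lambda>A. peval A q = 0) (nb A0)"
  proof
    assume "eventually (\<lambda>A. peval A q = 0) (nb A0)"
    then have "\<forall>B. length B = n \<longrightarrow> peval B q = 0"
      using identity_thm[of q A0] vq Node.prems(2) by auto
    with qex show False by auto
  qed
  have "eventually (\<lambda>A. eventually Q (nb A) \<and> length A = n) (nb A0)"
    using eventually_nb_open[OF Node.prems(3)] eventually_nb_length[of A0] Node.prems(2)
    by (auto elim: eventually_elim2)
  then obtain A2 where A2: "eventually Q (nb A2)" "length A2 = n" "peval A2 q \<noteq> 0"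
    using ev_exists[OF qnz] by blast
  have "eventually (\<lambda>A. peval A q \<noteq> 0) (nb A2)"
    using tendsto_imp_eventually_ne[OF peval_cont[of q A2]] A2 vq by auto
  then have Q2: "eventually (\<lambda>A. Q A \<and> peval A q \<noteq> 0 \<and> length A = n) (nb A2)"
    using A2 eventually_nb_length[of A2] by (auto intro: eventually_conj)
  show ?case
  proof (cases "eventually (\<lambda>A. peval A p = 0) (nb A2)")
    case True
    with Q2 have "eventually (\<lambda>A. Q A \<and> rfeval A f = 0) (nb A2)"
      by (auto elim: eventually_elim2 simp: rfeval_def f)
    from Node.IH(2)[OF we A2(2) this] obtain A1 gs where
      "length A1 = n" "gs \<in> leaves eq"
      "eventually (\<lambda>A. (Q A \<and> rfeval A f = 0) \<and> run A eq = map (rfeval A) gs) (nb A1)" by blast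
    then show ?thesis
      by (intro exI[of _ A1] exI[of _ gs]) (auto elim: eventually_mono)
  next
    case False
    have "eventually (\<lambda>A. eventually (\<lambda>A. Q A \<and> peval A q \<noteq> 0 \<and> length A = n) (nb A)) (nb A2)"
      using eventually_nb_open[OF Q2] .
    then obtain A3 where A3: "eventually (\<lambda>A. Q A \<and> peval A q \<noteq> 0 \<and> length A = n) (nb A3)"
      "peval A3 p \<noteq> 0"
      using ev_exists[OF False] by blast
    from eventually_nb_self[OF A3(1)] have A3': "peval A3 q \<noteq> 0" "length A3 = n" by auto
    have lim: "((\<lambda>A. rfeval A f) \<longlongrightarrow> rfeval A3 f) (nb A3)"
      using rfeval_cont[of f A3] vp vq A3' f by auto
    have nz: "rfeval A3 f \<noteq> 0" using A3 A3' by (simp add: rfeval_def f)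
    show ?thesis
    proof (cases "rfeval A3 f < 0")
      case True
      have "eventually (\<lambda>A. rfeval A f < 0) (nb A3)" using order_tendstoD(2)[OF lim True] .
      with A3(1) have "eventually (\<lambda>A. Q A \<and> rfeval A f < 0) (nb A3)"
        by (auto elim: eventually_elim2)
      from Node.IH(1)[OF wl A3'(2) this] obtain A1 gs where
        "length A1 = n" "gs \<in> leaves lt"
        "eventually (\<lambda>A. (Q A \<and> rfeval A f < 0) \<and> run A lt = map (rfeval A) gs) (nb A1)" by blast
      then show ?thesis
        by (intro exI[of _ A1] exI[of _ gs]) (auto elim: eventually_mono)
    next
      case False
      then have pos: "0 < rfeval A3 f" using nz by auto
      have "eventually (\<lambda>A. 0 < rfeval A f) (nb A3)" using order_tendstoD(1)[OF lim pos] .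
      with A3(1) have "eventually (\<lambda>A. Q A \<and> 0 < rfeval A f) (nb A3)"
        by (auto elim: eventually_elim2)
      from Node.IH(3)[OF wg A3'(2) this] obtain A1 gs where
        "length A1 = n" "gs \<in> leaves gt"
        "eventually (\<lambda>A. (Q A \<and> 0 < rfeval A f) \<and> run A gt = map (rfeval A) gs) (nb A1)" by blast
      then show ?thesis
        by (intro exI[of _ A1] exI[of _ gs]) (auto elim: eventually_mono)
    qed
  qed
qed




definition wexp :: "nat \<Rightarrow> nat \<Rightarrow> pexp" where
  "wexp l p = foldr (\<lambda>i e. PAdd (PVar i) e) [p..<p+l] (PConst 0)"

lemma peval_foldr: "peval A (foldr (\<lambda>i e. PAdd (PVar i) e) xs (PConst 0)) = (\<Sum>i\<leftarrow>xs. A!(i-1))"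
  by (induction xs) auto

lemma pvars_foldr: "pvars (foldr (\<lambda>i e. PAdd (PVar i) e) xs (PConst 0)) = set xs"
  by (induction xs) auto

lemma peval_wexp: "l \<ge> 1 \<Longrightarrow> peval A (wexp l p) = window_sum A l p"
proof -
  assume l: "l \<ge> 1"
  have "peval A (wexp l p) = (\<Sum>i\<in>{p..<p+l}. A!(i-1))"
    unfolding wexp_def peval_foldr by (simp add: interv_sum_list_conv_sum_set_nat)
  also have "{p..<p+l} = {p..p+l-1}" using l by auto
  finally show ?thesis by (simp add: window_sum_def)
qed

lemma pvars_wexp: "pvars (wexp l p) = {p..<p+l}"
  by (simp add: wexp_def pvars_foldr)

lemma pvars_wexp_sub: "l \<in> {1..n} \<Longrightarrow> p \<in> {1..n - l + 1} \<Longrightarrow> pvars (wexp l p) \<subseteq> {1..n}"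
  by (auto simp: pvars_wexp)

lemma strict_max:
  assumes u: "output_configs A0 = {P}" and n: "length A0 = n"
    and l: "l \<in> {1..n}" and q: "q \<in> {1..n - l + 1}" and qP: "q \<noteq> P!(l-1)"
  shows "window_sum A0 l q < window_sum A0 l (P!(l-1))"
proof -
  have oc: "is_output_config A0 P" using u by (auto simp: output_configs_def)
  then have le: "window_sum A0 l q \<le> window_sum A0 l (P!(l-1))"
    using l q n by (auto simp: is_output_config_def)
  have lenP: "length P = n" using oc n by (auto simp: is_output_config_def is_config_def)
  show ?thesis
  proof (rule ccontr)
    assume "\<not> ?thesis"
    with le have eqw: "window_sum A0 l q = window_sum A0 l (P!(l-1))" by simp
    define P' where "P' = P[l-1 := q]"
    have nth': "P'!(l'-1) = (if l' = l then q else P!(l'-1))" if "l' \<in> {1..n}" for l'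
      using that l lenP by (auto simp: P'_def nth_list_update)
    have "is_output_config A0 P'"
      unfolding is_output_config_def is_config_def
    proof (intro conjI ballI)
      show "length P' = length A0" using lenP n by (simp add: P'_def)
      fix l' assume l': "l' \<in> {1..length A0}"
      show "P' ! (l' - 1) \<in> {1..length A0 - l' + 1}"
        using nth'[of l'] l' n q oc by (auto simp: is_output_config_def is_config_def)
      fix q' assume q': "q' \<in> {1..length A0 - l' + 1}"
      show "window_sum A0 l' q' \<le> window_sum A0 l' (P' ! (l' - 1))"
        using nth'[of l'] l' n q' oc eqw by (auto simp: is_output_config_def)
    qed
    then have "P' = P" using u by (auto simp: output_configs_def)
    then have "P'!(l-1) = P!(l-1)" by simp
    with nth'[OF l] qP show False by simp
  qed
qed

lemma unique_nb:
  assumes "unique_config n P"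
  shows "\<exists>A0. length A0 = n \<and>
     eventually (\<lambda>A. length A = n \<and> (\<forall>P'. is_output_config A P' \<longrightarrow> P' = P)) (nb A0)"
proof -
  obtain A0 where A0: "length A0 = n" "output_configs A0 = {P}"
    using assms by (auto simp: unique_config_def)
  have cP: "is_config n P" using assms by (auto simp: unique_config_def)
  define S where "S = {(l, q). l \<in> {1..n} \<and> q \<in> {1..n - l + 1} \<and> q \<noteq> P!(l-1)}"
  have finS: "finite S" by (rule finite_subset[of _ "{1..n} \<times> {1..n}"]) (auto simp: S_def)
  have "\<forall>y\<in>S. eventually (\<lambda>A. window_sum A (fst y) (snd y) < window_sum A (fst y) (P!(fst y - 1))) (nb A0)"
  proof
    fix y assume "y \<in> S"
    then obtain l q where y: "y = (l, q)" "l \<in> {1..n}" "q \<in> {1..n - l + 1}" "q \<noteq> P!(l-1)"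
      by (auto simp: S_def)
    have Pl: "P!(l-1) \<in> {1..n - l + 1}" using cP y by (auto simp: is_config_def)
    have lim: "((\<lambda>A. peval A (wexp l (P!(l-1))) - peval A (wexp l q)) \<longlongrightarrow>
        peval A0 (wexp l (P!(l-1))) - peval A0 (wexp l q)) (nb A0)"
      using pvars_wexp_sub[OF y(2) Pl] pvars_wexp_sub[OF y(2,3)] A0(1)
      by (intro tendsto_diff peval_cont) auto
    have "0 < peval A0 (wexp l (P!(l-1))) - peval A0 (wexp l q)"
      using strict_max[OF A0(2) A0(1) y(2,3,4)] y(2) by (simp add: peval_wexp)
    from order_tendstoD(1)[OF lim this]
    show "eventually (\<lambda>A. window_sum A (fst y) (snd y) < window_sum A (fst y) (P!(fst y - 1))) (nb A0)"
      using y(1,2) by (auto simp: peval_wexp elim: eventually_mono)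
  qed
  from eventually_ball_finite[OF finS this]
  have ev: "eventually (\<lambda>A. \<forall>y\<in>S. window_sum A (fst y) (snd y) < window_sum A (fst y) (P!(fst y - 1))) (nb A0)" .
  have "eventually (\<lambda>A. length A = n \<and> (\<forall>P'. is_output_config A P' \<longrightarrow> P' = P)) (nb A0)"
    using ev eventually_nb_length[of A0]
  proof (eventually_elim)
    case (elim A)
    have "P' = P" if oc: "is_output_config A P'" for P'
    proof (rule nth_equalityI)
      have lens: "length P' = n" "length P = n" using oc elim cP A0(1)
        by (auto simp: is_output_config_def is_config_def)
      then show "length P' = length P" by simp
      fix i assume "i < length P'"
      then have i: "Suc i \<in> {1..n}" using lens by auto
      have r1: "P'!i \<in> {1..n - Suc i + 1}" using oc i elim A0(1)
        unfolding is_output_config_def is_config_def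
        by (metis diff_Suc_1)
      have r2: "window_sum A (Suc i) (P!i) \<le> window_sum A (Suc i) (P'!i)"
      proof -
        have "P!i \<in> {1..n - Suc i + 1}" using cP i unfolding is_config_def by (metis diff_Suc_1)
        then show ?thesis using oc i elim A0(1) unfolding is_output_config_def
          by (metis diff_Suc_1)
      qed
      show "P'!i = P!i"
      proof (rule ccontr)
        assume "P'!i \<noteq> P!i"
        then have "(Suc i, P'!i) \<in> S" using i r1 by (auto simp: S_def)
        with elim have "window_sum A (Suc i) (P'!i) < window_sum A (Suc i) (P!i)" by auto
        with r2 show False by simp
      qed
    qed
    then show ?case using elim A0(1) by auto
  qed
  with A0(1) show ?thesis by blast
qed

lemma wf_leaves: "wf_dtree n T \<Longrightarrow> gs \<in> leaves T \<Longrightarrow> length gs = n \<and> (\<forall>g\<in>set gs. is_rfun n g)"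
  by (induction T) auto

definition leaf_for :: "nat \<Rightarrow> rfun list \<Rightarrow> nat list \<Rightarrow> bool" where
  "leaf_for n gs P \<longleftrightarrow> (\<forall>l<n. \<forall>B. length B = n \<longrightarrow>
      peval B (fst (gs!l)) = real (P!l) * peval B (snd (gs!l)))"

lemma leaf_det:
  assumes sol: "solves_MCSP n T" and gs: "gs \<in> leaves T" and A1: "length A1 = n"
    and cP: "is_config n P"
    and ev: "eventually (\<lambda>A. (length A = n \<and> (\<forall>P'. is_output_config A P' \<longrightarrow> P' = P))
               \<and> run A T = map (rfeval A) gs) (nb A1)"
  shows "leaf_for n gs P"
  unfolding leaf_for_def
proof (intro allI impI)
  fix l and B :: "real list" assume l: "l < n" and B: "length B = n"
  have wg: "length gs = n" "\<forall>g\<in>set gs. is_rfun n g" using wf_leaves[OF _ gs] sol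
    by (auto simp: solves_MCSP_def)
  have lenP: "length P = n" using cP by (auto simp: is_config_def)
  have Pl: "P!l \<ge> 1" using cP l by (auto simp: is_config_def dest: bspec[of _ _ "Suc l"])
  obtain p q where g: "gs!l = (p, q)" by fastforce
  have rg: "is_rfun n (p, q)" using wg l g by (metis nth_mem)
  have "eventually (\<lambda>A. rfeval A (gs!l) = real (P!l)) (nb A1)"
    using ev
  proof (eventually_elim)
    case (elim A)
    then obtain P' where "is_output_config A P'" "run A T = map real P'"
      using sol by (auto simp: solves_MCSP_def)
    with elim have "map (rfeval A) gs = map real P" by auto
    then have "map (rfeval A) gs ! l = map real P ! l" by simp
    then show ?case using l wg lenP by simp
  qed
  then have "eventually (\<lambda>A. peval A (PAdd p (PNeg (PMul (PConst (real (P!l))) q))) = 0) (nb A1)"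
  proof (eventually_elim)
    case (elim A)
    then have "peval A p / peval A q = real (P!l)" by (simp add: g rfeval_def)
    moreover then have "peval A q \<noteq> 0" using Pl by auto
    ultimately show ?case by (simp add: field_simps)
  qed
  from identity_thm[OF _ this] B A1 rg
  show "peval B (fst (gs!l)) = real (P!l) * peval B (snd (gs!l))"
    by (auto simp: g is_rfun_def)
qed

lemma leaf_for_inj:
  assumes "leaf_for n gs P" "leaf_for n gs P'" "is_config n P" "is_config n P'"
    and "length gs = n" "\<forall>g\<in>set gs. is_rfun n g"
  shows "P = P'"
proof (rule nth_equalityI)
  show "length P = length P'" using assms by (auto simp: is_config_def)
  fix l assume "l < length P"
  then have l: "l < n" using assms by (auto simp: is_config_def)
  then have "is_rfun n (gs!l)" using assms by auto
  then obtain B where B: "length B = n" "peval B (snd (gs!l)) \<noteq> 0" by (auto simp: is_rfun_def)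
  have "real (P!l) * peval B (snd (gs!l)) = real (P'!l) * peval B (snd (gs!l))"
    using assms(1,2) l B unfolding leaf_for_def by metis
  with B show "P!l = P'!l" by simp
qed

lemma lower_bound:
  assumes sol: "solves_MCSP n T" and PP: "\<forall>P\<in>PP. unique_config n P"
  shows "finite PP \<and> card PP \<le> 3 ^ height T"
proof -
  have wf: "wf_dtree n T" using sol by (simp add: solves_MCSP_def)
  have ex: "\<exists>gs. gs \<in> leaves T \<and> leaf_for n gs P" if P: "P \<in> PP" for P
  proof -
    have u: "unique_config n P" using PP P by auto
    then have cP: "is_config n P" by (simp add: unique_config_def)
    obtain A0 where A0: "length A0 = n"
      "eventually (\<lambda>A. length A = n \<and> (\<forall>P'. is_output_config A P' \<longrightarrow> P' = P)) (nb A0)"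
      using unique_nb[OF u] by blast
    from descend[OF wf A0] obtain A1 gs where "length A1 = n" "gs \<in> leaves T"
      "eventually (\<lambda>A. (length A = n \<and> (\<forall>P'. is_output_config A P' \<longrightarrow> P' = P))
               \<and> run A T = map (rfeval A) gs) (nb A1)" by blast
    then show ?thesis using leaf_det[OF sol _ _ cP] by blast
  qed
  define ch where "ch P = (SOME gs. gs \<in> leaves T \<and> leaf_for n gs P)" for P
  have ch: "ch P \<in> leaves T \<and> leaf_for n (ch P) P" if "P \<in> PP" for P
    unfolding ch_def using someI_ex[OF ex[OF that]] .
  have inj: "inj_on ch PP"
  proof (rule inj_onI)
    fix P P' assume P: "P \<in> PP" and P': "P' \<in> PP" and eq: "ch P = ch P'"
    have w: "length (ch P) = n \<and> (\<forall>g\<in>set (ch P). is_rfun n g)"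
      using wf_leaves[OF wf] ch[OF P] by blast
    show "P = P'"
      using leaf_for_inj[of n "ch P" P P'] ch[OF P] ch[OF P'] eq w PP P P'
      by (auto simp: unique_config_def)
  qed
  have sub: "ch ` PP \<subseteq> leaves T" using ch by auto
  have fl: "finite (leaves T)" "card (leaves T) \<le> 3 ^ height T" using leaves_card by auto
  have "finite PP" using finite_imageD[OF finite_subset[OF sub fl(1)] inj] .
  moreover have "card PP \<le> card (leaves T)" using card_inj_on_le[OF inj sub fl(1)] .
  ultimately show ?thesis using fl(2) by simp
qed




primrec check :: "pexp list \<Rightarrow> dtree \<Rightarrow> dtree \<Rightarrow> dtree" where
  "check [] S F = S"
| "check (c # cs) S F = Node (c, PConst 1) F (check cs S F) (check cs S F)"

lemma run_check: "run A (check cs S F) = (if \<forall>c\<in>set cs. 0 \<le> peval A c then run A S else run A F)"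
  by (induction cs) (auto simp: rfeval_def)

lemma rfun_const: "pvars c \<subseteq> {1..n} \<Longrightarrow> is_rfun n (c, PConst 1)"
  unfolding is_rfun_def by (auto intro: exI[of _ "replicate n 0"])

lemma wf_check: "\<forall>c\<in>set cs. pvars c \<subseteq> {1..n} \<Longrightarrow> wf_dtree n S \<Longrightarrow> wf_dtree n F \<Longrightarrow> wf_dtree n (check cs S F)"
  by (induction cs) (simp_all add: rfun_const)

definition cexp :: "nat \<Rightarrow> nat \<Rightarrow> nat \<Rightarrow> pexp" where
  "cexp l p q = PAdd (wexp l p) (PNeg (wexp l q))"

definition conds :: "nat \<Rightarrow> nat list \<Rightarrow> pexp list" where
  "conds n P = concat (map (\<lambda>l. map (\<lambda>q. cexp l (P!(l-1)) q) [1..<n-l+2]) [1..<n+1])"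

lemma mem_conds: "c \<in> set (conds n P) \<longleftrightarrow> (\<exists>l q. l \<in> {1..n} \<and> q \<in> {1..n-l+1} \<and> c = cexp l (P!(l-1)) q)"
proof -
  have e1: "\<And>l. {1..<n-l+2} = {1..n-l+1}" by auto
  have e2: "{1..<n+1} = {1..n}" by auto
  show ?thesis by (simp only: conds_def set_concat set_map set_upt e1 e2 image_image) blast
qed

lemma conds_iff:
  assumes "is_config n P" "length A = n"
  shows "(\<forall>c\<in>set (conds n P). 0 \<le> peval A c) \<longleftrightarrow> is_output_config A P"
proof
  assume H: "\<forall>c\<in>set (conds n P). 0 \<le> peval A c"
  show "is_output_config A P"
    unfolding is_output_config_def
  proof (intro conjI ballI)
    show "is_config (length A) P" using assms by simp
    fix l q assume l: "l \<in> {1..length A}" and q: "q \<in> {1..length A - l + 1}"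
    then have "cexp l (P!(l-1)) q \<in> set (conds n P)" unfolding mem_conds using assms by blast
    with H have "0 \<le> peval A (cexp l (P!(l-1)) q)" by blast
    then show "window_sum A l q \<le> window_sum A l (P ! (l - 1))"
      using l by (simp add: cexp_def peval_wexp)
  qed
next
  assume H: "is_output_config A P"
  show "\<forall>c\<in>set (conds n P). 0 \<le> peval A c"
  proof
    fix c assume "c \<in> set (conds n P)"
    then obtain l q where lq: "l \<in> {1..n}" "q \<in> {1..n-l+1}" "c = cexp l (P!(l-1)) q"
      unfolding mem_conds by blast
    then have "window_sum A l q \<le> window_sum A l (P ! (l - 1))"
      using H assms unfolding is_output_config_def by blast
    then show "0 \<le> peval A c" using lq by (simp add: cexp_def peval_wexp)
  qed
qed

lemma conds_vars:
  assumes "is_config n P" shows "\<forall>c\<in>set (conds n P). pvars c \<subseteq> {1..n}"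
proof
  fix c assume "c \<in> set (conds n P)"
  then obtain l q where lq: "l \<in> {1..n}" "q \<in> {1..n-l+1}" "c = cexp l (P!(l-1)) q"
    unfolding mem_conds by blast
  have "P!(l-1) \<in> {1..n-l+1}" using assms lq by (auto simp: is_config_def)
  then show "pvars c \<subseteq> {1..n}" using lq pvars_wexp_sub[of l n] by (auto simp: cexp_def)
qed

definition leafP :: "nat list \<Rightarrow> dtree" where
  "leafP P = Leaf (map (\<lambda>p. (PConst (real p), PConst 1)) P)"

lemma run_leafP: "run A (leafP P) = map real P"
  by (simp add: leafP_def rfeval_def comp_def)

lemma wf_leafP: "length P = n \<Longrightarrow> wf_dtree n (leafP P)"
  by (auto simp: leafP_def intro: rfun_const)

primrec build :: "nat \<Rightarrow> nat list list \<Rightarrow> dtree" where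
  "build n [] = leafP (replicate n 1)"
| "build n (P # Ps) = check (conds n P) (leafP P) (build n Ps)"

lemma build_wf: "\<forall>P\<in>set Ps. is_config n P \<Longrightarrow> wf_dtree n (build n Ps)"
  by (induction Ps) (auto intro!: wf_check wf_leafP conds_vars simp: is_config_def)

lemma build_correct:
  assumes "\<forall>P\<in>set Ps. is_config n P" "length A = n" "\<exists>P\<in>set Ps. is_output_config A P"
  shows "\<exists>P. is_output_config A P \<and> run A (build n Ps) = map real P"
  using assms
proof (induction Ps)
  case Nil then show ?case by simp
next
  case (Cons P Ps)
  show ?case
  proof (cases "is_output_config A P")
    case True
    then show ?thesis using conds_iff[of n P A] Cons.prems
      by (auto simp: run_check run_leafP)
  next
    case False
    then have "\<exists>P\<in>set Ps. is_output_config A P" using Cons.prems by auto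
    with Cons show ?thesis using conds_iff[of n P A] False
      by (auto simp: run_check)
  qed
qed

lemma ex_argmax:
  fixes f :: "nat \<Rightarrow> real"
  assumes "finite S" "S \<noteq> {}"
  shows "\<exists>x\<in>S. \<forall>y\<in>S. f y \<le> f x"
proof -
  have "Max (f ` S) \<in> f ` S" using assms by (intro Max_in) auto
  then obtain x where "x \<in> S" "f x = Max (f ` S)" by auto
  moreover have "\<forall>y\<in>S. f y \<le> Max (f ` S)" using assms by auto
  ultimately show ?thesis by metis
qed

lemma exists_output:
  assumes "length A = n"
  shows "\<exists>P. is_output_config A P"
proof -
  define sel where "sel l = (SOME q. q \<in> {1..n-l+1} \<and> (\<forall>q'\<in>{1..n-l+1}. window_sum A l q' \<le> window_sum A l q))" for l
  have sel: "sel l \<in> {1..n-l+1} \<and> (\<forall>q'\<in>{1..n-l+1}. window_sum A l q' \<le> window_sum A l (sel l))" for l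
  proof -
    have "\<exists>q. q \<in> {1..n-l+1} \<and> (\<forall>q'\<in>{1..n-l+1}. window_sum A l q' \<le> window_sum A l q)"
      using ex_argmax[of "{1..n-l+1}" "window_sum A l"] by auto
    then show ?thesis unfolding sel_def by (rule someI_ex)
  qed
  define P where "P = map sel [1..<n+1]"
  have nth: "P!(l-1) = sel l" if "l \<in> {1..n}" for l
    using that by (auto simp: P_def nth_map nth_upt simp del: upt_Suc)
  have "is_output_config A P"
    unfolding is_output_config_def is_config_def
    using assms nth sel by (auto simp: P_def)
  then show ?thesis by blast
qed

lemma configs_finite: "finite {P. is_config n P}"
proof (rule finite_subset)
  show "{P. is_config n P} \<subseteq> {xs. set xs \<subseteq> {0..n} \<and> length xs = n}"
  proof safe
    fix P x assume P: "is_config n P" and x: "x \<in> set P"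
    then obtain j where j: "j < length P" "x = P!j" by (auto simp: in_set_conv_nth)
    then have "Suc j \<in> {1..n}" using P by (auto simp: is_config_def)
    then have "P!(Suc j - 1) \<in> {1..n - Suc j + 1}" using P unfolding is_config_def by blast
    then have "x \<le> n - Suc j + 1" using j by simp
    moreover have "Suc j \<le> n" using \<open>Suc j \<in> {1..n}\<close> by simp
    ultimately show "x \<in> {0..n}" by simp
  qed (auto simp: is_config_def)
  show "finite {xs. set xs \<subseteq> {0..n} \<and> length xs = n}"
    by (rule finite_lists_length_eq) simp
qed

lemma solver_exists: "\<exists>T. solves_MCSP n T"
proof -
  obtain Ps where Ps: "set Ps = {P. is_config n P}" using finite_list[OF configs_finite] by blast
  have "solves_MCSP n (build n Ps)"
    unfolding solves_MCSP_def
  proof (intro conjI allI impI)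
    show "wf_dtree n (build n Ps)" using Ps by (intro build_wf) auto
    fix A :: "real list" assume A: "length A = n"
    obtain P where "is_output_config A P" using exists_output[OF A] by blast
    then have "\<exists>P\<in>set Ps. is_output_config A P" using Ps A by (auto simp: is_output_config_def)
    then show "\<exists>P. is_output_config A P \<and> run A (build n Ps) = map real P"
      using build_correct[of Ps n A] Ps A by auto
  qed
  then show ?thesis by blast
qed

theorem theorem2:
  fixes n :: nat and PP :: "nat list set"
  assumes "n \<ge> 1"
    and "\<forall>P \<in> PP. unique_config n P"
    and "PP \<noteq> {}"
  shows "\<lceil>log 3 (real (card PP))\<rceil> \<le> int (K n)"
proof -
  have "\<exists>T. solves_MCSP n T \<and> height T = K n"
    unfolding K_def by (rule LeastI_ex) (use solver_exists[of n] in blast)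
  then obtain T where T: "solves_MCSP n T" "height T = K n" by blast
  from lower_bound[OF T(1) assms(2)] T(2)
  have fin: "finite PP" and c: "card PP \<le> 3 ^ K n" by auto
  have c1: "card PP \<ge> 1" using fin assms(3) by (simp add: Suc_le_eq card_gt_0_iff)
  have "real (card PP) \<le> 3 ^ K n" using c by (metis of_nat_le_iff of_nat_numeral of_nat_power)
  then have "log 3 (real (card PP)) \<le> log 3 (3 ^ K n)" using c1 by (intro log_mono) auto
  also have "\<dots> = real (K n)" by (simp add: log_nat_power)
  finally show ?thesis by (simp add: ceiling_le_iff)
qed


end
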